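(* Let $X$ be an irreducible affine variety over $\mathbb{C}$, $\mathcal{F}$ an algebraic foliation on $X$, and $Y\subseteq X$ an irreducible Zariski closed subset. Then for all $f,g\in\mathcal{O}_X$: (1) $\mathrm{ord}_{\mathcal{F},Y}(f+g)\ge\min\{\mathrm{ord}_{\mathcal{F},Y}(f),\mathrm{ord}_{\mathcal{F},Y}(g)\}$, with equality if $\mathrm{ord}_{\mathcal{F},Y}(f)\ne\mathrm{ord}_{\mathcal{F},Y}(g)$; (2) $\mathrm{ord}_{\mathcal{F},Y}(fg)=\mathrm{ord}_{\mathcal{F},Y}(f)+\mathrm{ord}_{\mathcal{F},Y}(g)$ (with the convention that a sum involving $+\infty$ is $+\infty$).
   Context: $\mathcal{O}_X$ is the ring of regular functions on $X$; an algebraic foliation $\mathcal{F}$ is a collection of $\mathbb{C}$-derivations of $\mathcal{O}_X$ stable under Lie bracket; $M_{\mathcal{F}}$ is the $\mathcal{O}_X$-module generated by $\mathcal{F}$. $I_Y$ is the ideal of regular functions vanishing on $Y$. Fix generators $\partial_1,\dots,\partial_r$ of $M_{\mathcal{F}}$; for $I=(i_1,\dots,i_m)\in\{1,\dots,r\}^m$ set $\partial_I=\partial_{i_1}\circ\cdots\circ\partial_{i_m}$, $|I|=m$, with $\partial_\emptyset=\mathrm{id}$ and $|\emptyset|=0$. The contact order is $\mathrm{ord}_{\mathcal{F},Y}(f)=\inf\{|I|:\ \partial_I(f)\notin I_Y\}\in\mathbb{N}\cup\{+\infty\}$; it does not depend on the choice of generators. *)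

theory Defs
  imports Complex_Main "HOL-Library.Extended_Nat"
begin

text \<open>The coordinate ring O_X is modelled as a type 'a of class idom (X irreducible,
so O_X is an integral domain), equipped with a ring homomorphism emb from the complex
numbers (the C-algebra structure), and assumed finitely generated as a C-algebra.\<close>

definition complex_algebra :: "(complex \<Rightarrow> 'a::comm_ring_1) \<Rightarrow> bool" where
  "complex_algebra emb \<longleftrightarrow> emb 1 = 1 \<and> (\<forall>a b. emb (a + b) = emb a + emb b)
     \<and> (\<forall>a b. emb (a * b) = emb a * emb b)"

inductive_set alg_gen :: "(complex \<Rightarrow> 'a::comm_ring_1) \<Rightarrow> 'a set \<Rightarrow> 'a set"
  for emb :: "complex \<Rightarrow> 'a" and G :: "'a set" where
  gen: "x \<in> G \<Longrightarrow> x \<in> alg_gen emb G"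
| scal: "emb c \<in> alg_gen emb G"
| add: "x \<in> alg_gen emb G \<Longrightarrow> y \<in> alg_gen emb G \<Longrightarrow> x + y \<in> alg_gen emb G"
| mult: "x \<in> alg_gen emb G \<Longrightarrow> y \<in> alg_gen emb G \<Longrightarrow> x * y \<in> alg_gen emb G"

definition finitely_generated_alg :: "(complex \<Rightarrow> 'a::comm_ring_1) \<Rightarrow> bool" where
  "finitely_generated_alg emb \<longleftrightarrow> (\<exists>G. finite G \<and> alg_gen emb G = UNIV)"

definition is_derivation :: "(complex \<Rightarrow> 'a::comm_ring_1) \<Rightarrow> ('a \<Rightarrow> 'a) \<Rightarrow> bool" where
  "is_derivation emb D \<longleftrightarrow> (\<forall>x y. D (x + y) = D x + D y)
     \<and> (\<forall>c x. D (emb c * x) = emb c * D x)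
     \<and> (\<forall>x y. D (x * y) = x * D y + y * D x)"

definition lie_bracket :: "('a::comm_ring_1 \<Rightarrow> 'a) \<Rightarrow> ('a \<Rightarrow> 'a) \<Rightarrow> 'a \<Rightarrow> 'a" where
  "lie_bracket D E = (\<lambda>x. D (E x) - E (D x))"

definition foliation :: "(complex \<Rightarrow> 'a::comm_ring_1) \<Rightarrow> ('a \<Rightarrow> 'a) set \<Rightarrow> bool" where
  "foliation emb F \<longleftrightarrow> (\<forall>D\<in>F. is_derivation emb D)
     \<and> (\<forall>D\<in>F. \<forall>E\<in>F. lie_bracket D E \<in> F)"

inductive_set mod_span :: "('a::comm_ring_1 \<Rightarrow> 'a) set \<Rightarrow> ('a \<Rightarrow> 'a) set"
  for F :: "('a \<Rightarrow> 'a) set" where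
  zero: "(\<lambda>x. 0) \<in> mod_span F"
| smul: "D \<in> F \<Longrightarrow> (\<lambda>x. a * D x) \<in> mod_span F"
| add: "D \<in> mod_span F \<Longrightarrow> E \<in> mod_span F \<Longrightarrow> (\<lambda>x. D x + E x) \<in> mod_span F"

text \<open>Points of X = C-algebra homomorphisms O_X -> C.\<close>
definition is_point :: "(complex \<Rightarrow> 'a::comm_ring_1) \<Rightarrow> ('a \<Rightarrow> complex) \<Rightarrow> bool" where
  "is_point emb p \<longleftrightarrow> (\<forall>x y. p (x + y) = p x + p y) \<and> (\<forall>x y. p (x * y) = p x * p y)
     \<and> (\<forall>c. p (emb c) = c)"

definition zariski_closed :: "(complex \<Rightarrow> 'a::comm_ring_1) \<Rightarrow> ('a \<Rightarrow> complex) set \<Rightarrow> bool" where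
  "zariski_closed emb Y \<longleftrightarrow> (\<exists>S. Y = {p. is_point emb p \<and> (\<forall>f\<in>S. p f = 0)})"

definition irreducible_closed :: "(complex \<Rightarrow> 'a::comm_ring_1) \<Rightarrow> ('a \<Rightarrow> complex) set \<Rightarrow> bool" where
  "irreducible_closed emb Y \<longleftrightarrow> zariski_closed emb Y \<and> Y \<noteq> {}
     \<and> (\<forall>Z1 Z2. zariski_closed emb Z1 \<longrightarrow> zariski_closed emb Z2 \<longrightarrow> Y \<subseteq> Z1 \<union> Z2
          \<longrightarrow> Y \<subseteq> Z1 \<or> Y \<subseteq> Z2)"

definition vanishing_ideal :: "('a \<Rightarrow> complex) set \<Rightarrow> 'a set" where
  "vanishing_ideal Y = {f. \<forall>p\<in>Y. p f = 0}"

definition dcomp :: "('a \<Rightarrow> 'a) list \<Rightarrow> nat list \<Rightarrow> 'a \<Rightarrow> 'a" where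
  "dcomp ds w = foldr (\<lambda>i h. (ds ! i) \<circ> h) w id"

text \<open>Contact order w.r.t. the generators ds of M_F and the ideal I (Inf {} = infinity).\<close>
definition contact_ord :: "('a \<Rightarrow> 'a) list \<Rightarrow> 'a set \<Rightarrow> 'a \<Rightarrow> enat" where
  "contact_ord ds I f = Inf {enat (length w) | w. set w \<subseteq> {..<length ds} \<and> dcomp ds w f \<notin> I}"

end

theory Submission
  imports Defs
begin

lemma dcomp_Nil[simp]: "dcomp ds [] = id" by (simp add: dcomp_def)
lemma dcomp_Cons[simp]: "dcomp ds (i#w) = (ds!i) \<circ> dcomp ds w" by (simp add: dcomp_def)
lemma dcomp_append[simp]: "dcomp ds (u@v) = dcomp ds u \<circ> dcomp ds v" by (induction u) auto

lemma exists_last: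
  fixes Q :: "nat \<Rightarrow> bool"
  assumes "Q k" "\<And>j. Q j \<Longrightarrow> j \<le> B"
  shows "\<exists>d. k \<le> d \<and> Q d \<and> \<not> Q (Suc d)"
proof -
  let ?d = "GREATEST j. Q j"
  have "Q ?d" using GreatestI_nat[of Q k B] assms by blast
  moreover have "k \<le> ?d" using Greatest_le_nat[of Q k B] assms by blast
  moreover have "\<not> Q (Suc ?d)"
    using Greatest_le_nat[of Q "Suc ?d" B] assms by fastforce
  ultimately show ?thesis by blast
qed

locale cs =
  fixes ds :: "('a::idom \<Rightarrow> 'a) list" and P :: "'a set"
  assumes der_add: "i < length ds \<Longrightarrow> (ds!i) (x+y) = (ds!i) x + (ds!i) y"
  and der_mult: "i < length ds \<Longrightarrow> (ds!i) (x*y) = x * (ds!i) y + y * (ds!i) x"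
  and P_zero: "0 \<in> P" and P_add: "x\<in>P \<Longrightarrow> y\<in>P \<Longrightarrow> x+y \<in> P"
  and P_mult: "x \<in> P \<Longrightarrow> y*x \<in> P" and P_uminus: "x \<in> P \<Longrightarrow> -x \<in> P"
  and P_prime: "x*y \<in> P \<Longrightarrow> x \<in> P \<or> y \<in> P" and P_nat: "N>0 \<Longrightarrow> of_nat N \<notin> P"
begin

definition valid where "valid w \<longleftrightarrow> set w \<subseteq> {..<length ds}"
definition Z where "Z n h \<longleftrightarrow> (\<forall>w. valid w \<longrightarrow> length w < n \<longrightarrow> dcomp ds w h \<in> P)"
definition E where "E n h \<longleftrightarrow> Z n h \<and> \<not> Z (Suc n) h"

lemma der_zero: "i<length ds \<Longrightarrow> (ds!i) 0 = 0" using der_add[of i 0 0] by (metis add.right_neutral add_left_cancel)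
lemma der_minus: assumes i: "i<length ds" shows "(ds!i) (-x) = - (ds!i) x"
proof -
  have h: "(ds!i) x + (ds!i) (-x) = 0" using der_add[OF i, of x "-x"] der_zero[OF i] by simp
  have "- (ds!i) x = (ds!i) (-x)" using h neg_eq_iff_add_eq_0 by blast
  then show ?thesis by simp
qed
lemma der_diff: "i<length ds \<Longrightarrow> (ds!i) (x-y) = (ds!i) x - (ds!i) y"
proof -
  assume i: "i<length ds"
  show ?thesis using der_add[OF i, of x "-y"] der_minus[OF i, of y] by simp
qed
lemma der_sum: "i<length ds \<Longrightarrow> (ds!i) (sum h S) = (\<Sum>k\<in>S. (ds!i) (h k))"
  by (induction S rule: infinite_finite_induct) (auto simp: der_zero der_add)
lemma der_nat: "i<length ds \<Longrightarrow> (ds!i) (of_nat c * x) = of_nat c * (ds!i) x"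
  by (induction c) (auto simp: der_add distrib_right der_zero)

lemma dc_add: "valid w \<Longrightarrow> dcomp ds w (x+y) = dcomp ds w x + dcomp ds w y"
  by (induction w) (auto simp: valid_def der_add)
lemma dc_minus: "valid w \<Longrightarrow> dcomp ds w (-x) = - dcomp ds w x"
  by (induction w) (auto simp: valid_def der_minus)
lemma dc_nat: "valid w \<Longrightarrow> dcomp ds w (of_nat c * x) = of_nat c * dcomp ds w x"
  by (induction w) (auto simp: valid_def der_nat)

lemma dc_zero: "valid w \<Longrightarrow> dcomp ds w 0 = 0" by (induction w) (auto simp: valid_def der_zero)

lemma P_diff: "x\<in>P \<Longrightarrow> y\<in>P \<Longrightarrow> x-y\<in>P"
proof -
  assume "x\<in>P" "y\<in>P"
  then have "x + -y \<in> P" using P_add P_uminus by blast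
  then show ?thesis by simp
qed
lemma P_mult2: "x \<in> P \<Longrightarrow> x*y \<in> P" using P_mult by (metis mult.commute)
lemma P_sum: "(\<forall>k\<in>S. h k \<in> P) \<Longrightarrow> sum h S \<in> P"
  by (induction S rule: infinite_finite_induct) (auto simp: P_zero P_add)

lemma Z0[simp]: "Z 0 h" by (simp add: Z_def)
lemma Z_mono: "Z n h \<Longrightarrow> m \<le> n \<Longrightarrow> Z m h" by (auto simp: Z_def)
lemma Z_add: "Z n x \<Longrightarrow> Z n y \<Longrightarrow> Z n (x+y)" by (auto simp: Z_def dc_add P_add)
lemma Z_minus: "Z n x \<Longrightarrow> Z n (-x)" by (auto simp: Z_def dc_minus P_uminus)
lemma Z_diff: "Z n x \<Longrightarrow> Z n y \<Longrightarrow> Z n (x-y)"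
proof -
  assume "Z n x" "Z n y"
  then have "Z n (x + -y)" using Z_add Z_minus by blast
  then show ?thesis by simp
qed
lemma Z_sum: "(\<forall>k\<in>S. Z n (h k)) \<Longrightarrow> Z n (sum h S)"
proof (induction S rule: infinite_finite_induct)
  case (infinite A) then show ?case by (simp add: Z_def dc_zero P_zero)
next
  case empty
  show ?case by (simp add: Z_def P_zero dc_zero)
next
  case (insert x F) then show ?case by (simp add: Z_add)
qed
lemma Z_P: "Z n h \<Longrightarrow> n>0 \<Longrightarrow> h \<in> P"
  unfolding Z_def valid_def by (metis empty_set empty_subsetI list.size(3) dcomp_Nil id_apply)
lemma Z1: "Z (Suc 0) h \<longleftrightarrow> h \<in> P"
  unfolding Z_def by (auto simp: valid_def)

lemma Z_D: "Z n h \<Longrightarrow> i < length ds \<Longrightarrow> Z (n-1) ((ds!i) h)"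
  unfolding Z_def
proof (intro allI impI)
  fix w assume h: "\<forall>w. valid w \<longrightarrow> length w < n \<longrightarrow> dcomp ds w h \<in> P" "i < length ds"
    "valid w" "length w < n - 1"
  have "valid (w@[i])" "length (w@[i]) < n" using h by (auto simp: valid_def)
  then have "dcomp ds (w@[i]) h \<in> P" using h(1) by blast
  then show "dcomp ds w ((ds ! i) h) \<in> P" by simp
qed

lemma Z_SucI: "h \<in> P \<Longrightarrow> (\<And>i. i<length ds \<Longrightarrow> Z n ((ds!i) h)) \<Longrightarrow> Z (Suc n) h"
  unfolding Z_def
proof (intro allI impI)
  fix w assume h: "h \<in> P" "\<And>i. i<length ds \<Longrightarrow> \<forall>w. valid w \<longrightarrow> length w < n \<longrightarrow> dcomp ds w ((ds ! i) h) \<in> P"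
    "valid w" "length w < Suc n"
  show "dcomp ds w h \<in> P"
  proof (cases w rule: rev_cases)
    case Nil then show ?thesis using h by simp
  next
    case (snoc u i)
    then have "i < length ds" "valid u" "length u < n" using h by (auto simp: valid_def)
    then show ?thesis using h(2)[of i] snoc by simp
  qed
qed

lemma Z_pow: assumes "Z n h" "i<length ds" shows "Z (n-k) (((ds!i) ^^ k) h)"
proof (induction k)
  case 0 then show ?case using assms by simp
next
  case (Suc k)
  have "Z (n-k-1) ((ds!i) (((ds!i) ^^ k) h))" using Z_D[OF Suc.IH assms(2)] .
  moreover have "n - k - 1 = n - Suc k" by simp
  ultimately show ?case by simp
qed

lemma Z_mult: "Z a f \<Longrightarrow> Z b g \<Longrightarrow> Z (a+b) (f*g)"
proof (induction "a+b" arbitrary: a b f g rule: less_induct)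
  case less
  show ?case
  proof (cases "a+b")
    case 0 then show ?thesis by simp
  next
    case (Suc m)
    have P1: "f*g \<in> P"
    proof (cases "a > 0")
      case True then show ?thesis using Z_P[OF less.prems(1)] P_mult2 by blast
    next
      case False then have "b > 0" using Suc by simp
      then show ?thesis using Z_P[OF less.prems(2)] P_mult by blast
    qed
    have "Z m ((ds!i) (f*g))" if i: "i < length ds" for i
    proof -
      have A: "Z m (f * (ds!i) g)"
      proof (cases "b = 0")
        case True
        then have "Z m f" using less.prems(1) Suc Z_mono by simp
        then show ?thesis using less.hyps[of m 0 f "(ds!i) g"] True Suc by simp
      next
        case False
        have "Z (b-1) ((ds!i) g)" using Z_D[OF less.prems(2) i] .
        then show ?thesis using less.hyps[of a "b-1" f "(ds!i) g"] less.prems False Suc by simp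
      qed
      have B: "Z m (g * (ds!i) f)"
      proof (cases "a = 0")
        case True
        then have "Z m g" using less.prems(2) Suc Z_mono by simp
        then show ?thesis using less.hyps[of m 0 g "(ds!i) f"] True Suc by simp
      next
        case False
        have "Z (a-1) ((ds!i) f)" using Z_D[OF less.prems(1) i] .
        then have "Z ((a-1)+b) ((ds!i) f * g)" using less.hyps[of "a-1" b "(ds!i) f" g] less.prems False Suc by simp
        then show ?thesis using False Suc by (simp add: mult.commute)
      qed
      show ?thesis using A B Z_add der_mult[OF i] by simp
    qed
    then show ?thesis using Z_SucI[OF P1] Suc by simp
  qed
qed

lemma E_nat_mult: assumes "E n x" "c>0" shows "E n (of_nat c * x)"
proof -
  have "Z n (of_nat c * x)" using Z_mult[of 0 "of_nat c" n x] assms by (simp add: E_def)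
  moreover have "\<not> Z (Suc n) (of_nat c * x)"
  proof
    assume z: "Z (Suc n) (of_nat c * x)"
    from assms obtain w where w: "valid w" "length w < Suc n" "dcomp ds w x \<notin> P"
      unfolding E_def Z_def by blast
    then have "dcomp ds w (of_nat c * x) \<in> P" using z unfolding Z_def by blast
    then have "of_nat c * dcomp ds w x \<in> P" using dc_nat[OF w(1)] by simp
    then have "of_nat c \<in> P \<or> dcomp ds w x \<in> P" by (rule P_prime)
    then show False using P_nat[OF assms(2)] w(3) by blast
  qed
  ultimately show ?thesis by (simp add: E_def)
qed

lemma E_add_Z: assumes "E n x" "Z (Suc n) y" shows "E n (x+y)"
proof -
  have "Z n (x+y)" using assms Z_add Z_mono unfolding E_def by (meson le_SucI order_refl)
  moreover have "\<not> Z (Suc n) (x+y)"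
  proof
    assume "Z (Suc n) (x+y)"
    then have "Z (Suc n) ((x+y) - y)" using Z_diff assms(2) by blast
    then show False using assms(1) by (simp add: E_def)
  qed
  ultimately show ?thesis by (simp add: E_def)
qed


lemma leibniz:
  assumes i: "i < length ds"
  shows "((ds!i) ^^ m) (f*g) = (\<Sum>k\<le>m. of_nat (m choose k) * (((ds!i)^^k) f * ((ds!i)^^(m-k)) g))"
proof (induction m)
  case 0 then show ?case by simp
next
  case (Suc m)
  define D where "D = ds!i"
  define A where "A k = (D^^k) f" for k
  define B where "B k = (D^^k) g" for k
  have IH: "(D ^^ m) (f*g) = (\<Sum>k\<le>m. of_nat (m choose k) * (A k * B (m-k)))"
    using Suc.IH by (simp add: D_def A_def B_def)
  have DA: "D (A k) = A (Suc k)" for k by (simp add: A_def)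
  have DB: "D (B k) = B (Suc k)" for k by (simp add: B_def)
  have iD: "D (x+y) = D x + D y" "D (x*y) = x * D y + y * D x" "D (of_nat c * x) = of_nat c * D x" "D (sum h S) = (\<Sum>k\<in>S. D (h k))" for x y c and h :: "nat \<Rightarrow> 'a" and S
    using der_add[OF i] der_mult[OF i] der_nat[OF i] der_sum[OF i] by (auto simp: D_def)
  let ?T1 = "\<Sum>k\<le>m. of_nat (m choose k) * (A k * B (Suc m - k))"
  let ?T2 = "\<Sum>k\<le>m. of_nat (m choose k) * (A (Suc k) * B (m - k))"
  have "(D ^^ Suc m) (f*g) = D ((D ^^ m) (f*g))" by simp
  also have "\<dots> = (\<Sum>k\<le>m. of_nat (m choose k) * D (A k * B (m-k)))" by (simp only: IH iD(4) iD(3))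
  also have "\<dots> = (\<Sum>k\<le>m. of_nat (m choose k) * (A k * B (Suc m - k)) + of_nat (m choose k) * (A (Suc k) * B (m - k)))"
  proof (rule sum.cong)
    fix k assume "k \<in> {..m}"
    then have "Suc (m-k) = Suc m - k" by simp
    then show "of_nat (m choose k) * D (A k * B (m-k)) = of_nat (m choose k) * (A k * B (Suc m - k)) + of_nat (m choose k) * (A (Suc k) * B (m - k))"
      using iD(2) DA DB by (simp add: algebra_simps)
  qed simp
  also have "\<dots> = ?T1 + ?T2" by (simp add: sum.distrib)
  finally have L: "(D ^^ Suc m) (f*g) = ?T1 + ?T2" .
  have T1: "?T1 = (\<Sum>k\<le>Suc m. of_nat (m choose k) * (A k * B (Suc m - k)))"
    by (simp add: sum.atMost_Suc binomial_eq_0)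
  also have "\<dots> = A 0 * B (Suc m) + (\<Sum>k\<le>m. of_nat (m choose Suc k) * (A (Suc k) * B (m - k)))"
    unfolding sum.atMost_Suc_shift by simp
  finally have T1': "?T1 = \<dots>" .
  have "(\<Sum>k\<le>Suc m. of_nat (Suc m choose k) * (A k * B (Suc m - k)))
      = A 0 * B (Suc m) + (\<Sum>k\<le>m. of_nat (Suc m choose Suc k) * (A (Suc k) * B (m - k)))"
    unfolding sum.atMost_Suc_shift by simp
  also have "\<dots> = A 0 * B (Suc m) + (?T2 + (\<Sum>k\<le>m. of_nat (m choose Suc k) * (A (Suc k) * B (m - k))))"
    by (simp only: binomial_Suc_Suc of_nat_add distrib_right sum.distrib)
  finally have R: "(\<Sum>k\<le>Suc m. of_nat (Suc m choose k) * (A k * B (Suc m - k))) = ?T1 + ?T2"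
    using T1' by (simp only: add_ac)
  show ?case using L R by (simp add: D_def A_def B_def)
qed

lemma step:
  assumes IH: "\<And>a' b' f' g'. a'+b' < a+b \<Longrightarrow> E a' f' \<Longrightarrow> E b' g' \<Longrightarrow> E (a'+b') (f'*g')"
    and a: "a \<ge> 1" and Ef: "E a f" and Eg: "E b g"
  shows "E (a+b) (f*g)"
proof -
  from Ef obtain w where w: "valid w" "length w < Suc a" "dcomp ds w f \<notin> P"
    unfolding E_def Z_def by blast
  have "\<not> length w < a" using Ef w unfolding E_def Z_def by blast
  then have lw: "length w = a" using w(2) by simp
  then have "w \<noteq> []" using a by auto
  then obtain u i where wu: "w = u @ [i]" by (metis rev_exhaust)
  have i: "i < length ds" and vu: "valid u" using w(1) wu by (auto simp: valid_def)
  define D where "D = ds!i"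
  have ZfD: "Z (a-k) ((D^^k) f)" for k using Z_pow[of a f i k] Ef i by (simp add: E_def D_def)
  have ZgD: "Z (b-k) ((D^^k) g)" for k using Z_pow[of b g i k] Eg i by (simp add: E_def D_def)
  have ZD: "Z n h \<Longrightarrow> Z (n-k) ((D^^k) h)" for n h k using Z_pow[of n h i k] i by (simp add: D_def)
  have Q1: "\<not> Z a (D f)"
  proof
    assume "Z a (D f)"
    then have "dcomp ds u (D f) \<in> P" using vu lw wu unfolding Z_def by simp
    then show False using w(3) wu by (simp add: D_def)
  qed
  obtain d where d: "1 \<le> d" "d \<le> a" "\<not> Z (Suc (a-d)) ((D^^d) f)"
    and d2: "\<not> (Suc d \<le> a \<and> \<not> Z (Suc (a - Suc d)) ((D^^Suc d) f))"
    using exists_last[of "\<lambda>j. j \<le> a \<and> \<not> Z (Suc (a-j)) ((D^^j) f)" 1 a] a Q1 by auto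
  have Zd: "Z (a-d) ((D^^Suc d) f)"
  proof (cases "Suc d \<le> a")
    case True
    then have "Suc (a - Suc d) = a - d" by simp
    then show ?thesis using d2 True by metis
  next
    case False then show ?thesis using d by simp
  qed
  obtain e where e: "e \<le> b" "\<not> Z (Suc (b-e)) ((D^^e) g)"
    and e2: "\<not> (Suc e \<le> b \<and> \<not> Z (Suc (b - Suc e)) ((D^^Suc e) g))"
    using exists_last[of "\<lambda>j. j \<le> b \<and> \<not> Z (Suc (b-j)) ((D^^j) g)" 0 b] Eg by (auto simp: E_def)
  have Ze: "Z (b-e) ((D^^Suc e) g)"
  proof (cases "Suc e \<le> b")
    case True
    then have "Suc (b - Suc e) = b - e" by simp
    then show ?thesis using e2 True by metis
  next
    case False then show ?thesis using e by simp
  qed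
  define n where "n = (a-d) + (b-e)"
  define m where "m = d + e"
  define X where "X = (D^^d) f * (D^^e) g"
  have EX: "E n X" unfolding n_def X_def
    by (rule IH) (use d e ZfD ZgD in \<open>auto simp: E_def\<close>)
  have EX2: "E n (of_nat (m choose d) * X)"
    by (rule E_nat_mult[OF EX]) (simp add: m_def)
  have Rest: "Z (Suc n) (\<Sum>k\<in>{..m} - {d}. of_nat (m choose k) * ((D^^k) f * (D^^(m-k)) g))"
  proof (rule Z_sum, rule ballI)
    fix k assume k: "k \<in> {..m} - {d}"
    have "Z (Suc n) ((D^^k) f * (D^^(m-k)) g)"
    proof (cases "k < d")
      case True
      have "(D^^(m-k)) g = (D^^(m - k - Suc e)) ((D^^Suc e) g)"
      proof -
        have "m - k = (m-k-Suc e) + Suc e" using True by (simp add: m_def)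
        then show ?thesis by (metis funpow_add comp_apply)
      qed
      then have Zg: "Z (b - e - (m - k - Suc e)) ((D^^(m-k)) g)" using ZD[OF Ze] by simp
      have "Z ((a-k) + (b - e - (m - k - Suc e))) ((D^^k) f * (D^^(m-k)) g)"
        using Z_mult[OF ZfD Zg] .
      then show ?thesis by (rule Z_mono) (use True d e in \<open>simp add: n_def m_def\<close>)
    next
      case False
      then have kd: "k > d" using k by auto
      have "(D^^k) f = (D^^(k - Suc d)) ((D^^Suc d) f)"
      proof -
        have "k = (k - Suc d) + Suc d" using kd by simp
        then show ?thesis by (metis funpow_add comp_apply)
      qed
      then have Zf: "Z (a - d - (k - Suc d)) ((D^^k) f)" using ZD[OF Zd] by simp
      have "Z ((a - d - (k - Suc d)) + (b - (m-k))) ((D^^k) f * (D^^(m-k)) g)"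
        using Z_mult[OF Zf ZgD] .
      then show ?thesis by (rule Z_mono) (use kd k d e in \<open>simp add: n_def m_def\<close>)
    qed
    then show "Z (Suc n) (of_nat (m choose k) * ((D^^k) f * (D^^(m-k)) g))"
      using Z_mult[of 0 "of_nat (m choose k)" "Suc n"] by simp
  qed
  have "(D^^m) (f*g) = (\<Sum>k\<le>m. of_nat (m choose k) * ((D^^k) f * (D^^(m-k)) g))"
    using leibniz[OF i] by (simp add: D_def)
  also have "\<dots> = of_nat (m choose d) * X + (\<Sum>k\<in>{..m} - {d}. of_nat (m choose k) * ((D^^k) f * (D^^(m-k)) g))"
    by (subst sum.remove[of _ d]) (auto simp: m_def X_def)
  finally have "E n ((D^^m) (f*g))" using E_add_Z[OF EX2 Rest] by simp
  then have nz: "\<not> Z (Suc n) ((D^^m) (f*g))" by (simp add: E_def)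
  have "\<not> Z (Suc (a+b)) (f*g)"
  proof
    assume "Z (Suc (a+b)) (f*g)"
    then have "Z (Suc (a+b) - m) ((D^^m) (f*g))" by (rule ZD)
    moreover have "Suc (a+b) - m = Suc n" using d e by (simp add: m_def n_def)
    ultimately show False using nz by simp
  qed
  moreover have "Z (a+b) (f*g)" using Z_mult Ef Eg by (simp add: E_def)
  ultimately show ?thesis by (simp add: E_def)
qed

lemma E_mult: "E a f \<Longrightarrow> E b g \<Longrightarrow> E (a+b) (f*g)"
proof (induction "a+b" arbitrary: a b f g rule: less_induct)
  case less
  show ?case
  proof (cases "a \<ge> 1")
    case True then show ?thesis using step less by blast
  next
    case a0: False
    show ?thesis
    proof (cases "b \<ge> 1")
      case True
      have "E (b+a) (g*f)"
        by (rule step[OF _ True less.prems(2) less.prems(1)]) (use less.hyps in auto)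
      then show ?thesis by (simp add: mult.commute add.commute)
    next
      case False
      then have "a = 0" "b = 0" using a0 by auto
      then have "f \<notin> P" "g \<notin> P" using less.prems by (auto simp: E_def Z1)
      then have "f*g \<notin> P" using P_prime by blast
      then show ?thesis using \<open>a = 0\<close> \<open>b = 0\<close> by (simp add: E_def Z1)
    qed
  qed
qed

lemma ord_ge: "enat n \<le> contact_ord ds P h \<longleftrightarrow> Z n h"
  unfolding contact_ord_def le_Inf_iff Z_def valid_def
proof (intro iffI allI impI ballI)
  fix w assume H: "\<forall>x\<in>{enat (length w) |w. set w \<subseteq> {..<length ds} \<and> dcomp ds w h \<notin> P}. enat n \<le> x"
    and w: "set w \<subseteq> {..<length ds}" "length w < n"
  show "dcomp ds w h \<in> P"
  proof (rule ccontr)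
    assume "dcomp ds w h \<notin> P"
    then have "enat n \<le> enat (length w)" using H w by blast
    then show False using w by simp
  qed
next
  fix x assume H: "\<forall>w. set w \<subseteq> {..<length ds} \<longrightarrow> length w < n \<longrightarrow> dcomp ds w h \<in> P"
    and x: "x \<in> {enat (length w) |w. set w \<subseteq> {..<length ds} \<and> dcomp ds w h \<notin> P}"
  then obtain w where "x = enat (length w)" "set w \<subseteq> {..<length ds}" "dcomp ds w h \<notin> P" by blast
  then show "enat n \<le> x" using H by (meson enat_ord_simps(1) not_le)
qed

lemma enat_eq_iff: "(e::enat) = enat n \<longleftrightarrow> enat n \<le> e \<and> \<not> enat (Suc n) \<le> e"
  by (cases e) auto

lemma enat_ge_iff: "(m::enat) \<le> e \<longleftrightarrow> (\<forall>n. enat n \<le> m \<longrightarrow> enat n \<le> e)"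
proof
  assume "\<forall>n. enat n \<le> m \<longrightarrow> enat n \<le> e"
  then show "m \<le> e"
  proof (cases m)
    case (enat k) then show ?thesis using \<open>\<forall>n. _\<close> by auto
  next
    case infinity
    show ?thesis
    proof (cases e)
      case (enat j) then show ?thesis using \<open>\<forall>n. _\<close> infinity by (metis Suc_n_not_le_n enat_ord_simps(1) enat_ord_simps(3))
    qed (simp)
  qed
qed (meson order_trans)

lemma ord_eq: "contact_ord ds P h = enat n \<longleftrightarrow> E n h"
  by (simp add: enat_eq_iff ord_ge E_def)

lemma ord_add: "min (contact_ord ds P f) (contact_ord ds P g) \<le> contact_ord ds P (f+g)"
  by (subst enat_ge_iff) (auto simp: ord_ge Z_add)

lemma ord_add_lt: assumes "contact_ord ds P f < contact_ord ds P g"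
  shows "contact_ord ds P (f+g) = contact_ord ds P f"
proof -
  obtain a where a: "contact_ord ds P f = enat a" using assms by (cases "contact_ord ds P f") auto
  have "enat (Suc a) \<le> contact_ord ds P g" using assms a by (simp add: Suc_ile_eq)
  then have "Z (Suc a) g" by (simp add: ord_ge)
  moreover have "E a f" using a ord_eq by blast
  ultimately have "E a (f+g)" using E_add_Z by blast
  then have "contact_ord ds P (f+g) = enat a" using ord_eq by blast
  then show ?thesis using a by simp
qed

lemma ord_mult: "contact_ord ds P (f*g) = contact_ord ds P f + contact_ord ds P g"
proof (cases "contact_ord ds P f = \<infinity> \<or> contact_ord ds P g = \<infinity>")
  case True
  have "Z n (f*g)" for n
  proof (cases "contact_ord ds P f = \<infinity>")
    case True
    then have "Z n f" using ord_ge by (metis enat_ord_code(3))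
    then show ?thesis using Z_mult[of n f 0 g] by simp
  next
    case False
    then have "Z n g" using ord_ge True by (metis enat_ord_code(3))
    then show ?thesis using Z_mult[of 0 f n g] by simp
  qed
  then have "contact_ord ds P (f*g) = \<infinity>"
    using enat_ge_iff[of \<infinity> "contact_ord ds P (f*g)"] ord_ge by (simp add: top_enat_def[symmetric] top_unique)
  then show ?thesis using True by auto
next
  case False
  then obtain a b where fa: "contact_ord ds P f = enat a" and gb: "contact_ord ds P g = enat b" by auto
  then have "E (a+b) (f*g)" using E_mult ord_eq by blast
  then have "contact_ord ds P (f*g) = enat (a+b)" using ord_eq by blast
  then show ?thesis using fa gb by simp
qed
end


lemma mod_span_der:
  assumes "\<forall>D\<in>F. is_derivation emb D" "D \<in> mod_span F"
  shows "(\<forall>x y. D (x+y) = D x + D y) \<and> (\<forall>x y. D (x*y) = x * D y + y * D x)"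
  using assms(2)
proof (induction rule: mod_span.induct)
  case zero then show ?case by simp
next
  case (smul D a)
  then have "is_derivation emb D" using assms(1) by blast
  then show ?case unfolding is_derivation_def by (simp add: algebra_simps)
next
  case (add D E) then show ?case by (simp add: algebra_simps)
qed

lemma point_zero: "is_point emb p \<Longrightarrow> p 0 = 0"
  unfolding is_point_def by (metis add.right_neutral add_left_cancel)

lemma point_minus: assumes "is_point emb p" shows "p (-x) = - p x"
proof -
  have "p x + p (-x) = 0" using assms point_zero[OF assms] unfolding is_point_def
    by (metis add.right_inverse)
  then show ?thesis by (metis add.commute add_eq_0_iff2 neg_eq_iff_add_eq_0)
qed

lemma emb_of_nat: assumes "complex_algebra emb" shows "emb (of_nat N) = of_nat N"
proof (induction N)
  case 0
  have "emb 0 = emb 0 + emb 0" using assms unfolding complex_algebra_def by (metis add_0)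
  then show ?case by simp
next
  case (Suc N)
  have "emb (1 + of_nat N) = emb 1 + emb (of_nat N)" using assms unfolding complex_algebra_def by blast
  then show ?case using Suc assms unfolding complex_algebra_def by simp
qed

theorem mainTheorem5:
  fixes emb :: "complex \<Rightarrow> 'a::idom"
    and F :: "('a \<Rightarrow> 'a) set"
    and ds :: "('a \<Rightarrow> 'a) list"
    and Y :: "('a \<Rightarrow> complex) set"
    and f g :: 'a
  assumes "complex_algebra emb"
    and "finitely_generated_alg emb"
    and "foliation emb F"
    and "set ds \<subseteq> mod_span F"
    and "mod_span F \<subseteq> mod_span (set ds)"
    and "irreducible_closed emb Y"
  shows "contact_ord ds (vanishing_ideal Y) (f + g)
           \<ge> min (contact_ord ds (vanishing_ideal Y) f) (contact_ord ds (vanishing_ideal Y) g)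
         \<and> (contact_ord ds (vanishing_ideal Y) f \<noteq> contact_ord ds (vanishing_ideal Y) g \<longrightarrow>
              contact_ord ds (vanishing_ideal Y) (f + g)
                = min (contact_ord ds (vanishing_ideal Y) f) (contact_ord ds (vanishing_ideal Y) g))
         \<and> contact_ord ds (vanishing_ideal Y) (f * g)
           = contact_ord ds (vanishing_ideal Y) f + contact_ord ds (vanishing_ideal Y) g"
proof -
  let ?P = "vanishing_ideal Y"
  have ders: "\<forall>D\<in>F. is_derivation emb D" using assms(3) unfolding foliation_def by blast
  have dsi: "ds!i \<in> mod_span F" if "i < length ds" for i using assms(4) that by auto
  obtain S where YS: "Y = {p. is_point emb p \<and> (\<forall>f\<in>S. p f = 0)}"
    using assms(6) unfolding irreducible_closed_def zariski_closed_def by blast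
  have pts: "is_point emb p" if "p \<in> Y" for p using that YS by blast
  have Yne: "Y \<noteq> {}" using assms(6) unfolding irreducible_closed_def by blast
  have irr: "\<And>Z1 Z2. zariski_closed emb Z1 \<Longrightarrow> zariski_closed emb Z2 \<Longrightarrow> Y \<subseteq> Z1 \<union> Z2 \<Longrightarrow> Y \<subseteq> Z1 \<or> Y \<subseteq> Z2"
    using assms(6) unfolding irreducible_closed_def by blast
  interpret cs ds ?P
  proof
    fix i x y assume "i < length ds"
    then show "(ds!i) (x+y) = (ds!i) x + (ds!i) y" "(ds!i) (x*y) = x * (ds!i) y + y * (ds!i) x"
      using mod_span_der[OF ders dsi] by blast+
  next
    show "0 \<in> ?P" using pts point_zero unfolding vanishing_ideal_def by blast
  next
    fix x y assume "x \<in> ?P" "y \<in> ?P"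
    moreover have "\<forall>p\<in>Y. p (x+y) = p x + p y" using pts unfolding is_point_def by blast
    ultimately show "x + y \<in> ?P" unfolding vanishing_ideal_def
      by (smt (verit, best) add_0 mem_Collect_eq)
  next
    fix x y assume "x \<in> ?P"
    moreover have "\<forall>p\<in>Y. p (y*x) = p y * p x" using pts unfolding is_point_def by blast
    ultimately show "y * x \<in> ?P" unfolding vanishing_ideal_def by auto
  next
    fix x assume hx: "x \<in> ?P"
    show "- x \<in> ?P" unfolding vanishing_ideal_def
    proof (rule CollectI, rule ballI)
      fix p assume p: "p \<in> Y"
      have "p x = 0" using hx p unfolding vanishing_ideal_def by blast
      then show "p (-x) = 0" using point_minus[OF pts[OF p]] by simp
    qed
  next
    fix x y assume xy: "x * y \<in> ?P"
    let ?Z1 = "{p. is_point emb p \<and> (\<forall>f\<in>{x}. p f = 0)}"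
    let ?Z2 = "{p. is_point emb p \<and> (\<forall>f\<in>{y}. p f = 0)}"
    have "zariski_closed emb ?Z1" "zariski_closed emb ?Z2" unfolding zariski_closed_def by blast+
    moreover have "Y \<subseteq> ?Z1 \<union> ?Z2"
    proof
      fix p assume p: "p \<in> Y"
      then have "p (x*y) = 0" using xy unfolding vanishing_ideal_def by blast
      then have "p x * p y = 0" using pts[OF p] unfolding is_point_def by simp
      then show "p \<in> ?Z1 \<union> ?Z2" using pts[OF p] by auto
    qed
    ultimately have "Y \<subseteq> ?Z1 \<or> Y \<subseteq> ?Z2" using irr by blast
    then show "x \<in> ?P \<or> y \<in> ?P" unfolding vanishing_ideal_def by auto
  next
    fix N :: nat assume N: "N > 0"
    obtain p where p: "p \<in> Y" using Yne by blast
    have "p (of_nat N) = p (emb (of_nat N))" using emb_of_nat[OF assms(1)] by simp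
    also have "\<dots> = of_nat N" using pts[OF p] unfolding is_point_def by blast
    finally have "p (of_nat N) \<noteq> 0" using N by simp
    then show "of_nat N \<notin> ?P" using p unfolding vanishing_ideal_def by blast
  qed
  have A: "min (contact_ord ds ?P f) (contact_ord ds ?P g) \<le> contact_ord ds ?P (f+g)"
    by (rule ord_add)
  have B: "contact_ord ds ?P (f + g) = min (contact_ord ds ?P f) (contact_ord ds ?P g)"
    if ne: "contact_ord ds ?P f \<noteq> contact_ord ds ?P g"
  proof (cases "contact_ord ds ?P f < contact_ord ds ?P g")
    case True
    then have "contact_ord ds ?P (f + g) = contact_ord ds ?P f" by (rule ord_add_lt)
    then show ?thesis using min_absorb1[OF less_imp_le[OF True]] by simp
  next
    case False
    then have lt: "contact_ord ds ?P g < contact_ord ds ?P f" using ne by auto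
    have "contact_ord ds ?P (g + f) = contact_ord ds ?P g" using ord_add_lt[OF lt] .
    then show ?thesis using min_absorb2[OF less_imp_le[OF lt]] by (simp add: add.commute)
  qed
  show ?thesis using A B ord_mult by blast
qed

end
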